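(* For every integer $n\ge 0$, $|\mathfrak D^2_{2n}(3142)|=C_n=\frac{1}{n+1}\binom{2n}{n}$, the $n$th Catalan number.
   Context: A Dumont permutation of the second kind of length $2n$ is a permutation $\pi\in\mathfrak S_{2n}$ such that for every $i=1,\dots,n$ one has $\pi(2i)<2i$ and $\pi(2i-1)\ge 2i-1$. $\mathfrak D^2_{2n}$ denotes the set of these ($\mathfrak D^2_0$ consists of the empty permutation). A permutation $\sigma$ contains a pattern $\tau\in\mathfrak S_k$ if some subsequence $(\sigma(i_1),\dots,\sigma(i_k))$, $i_1<\dots<i_k$, is order-isomorphic to $\tau$; otherwise $\sigma$ avoids $\tau$. $\mathfrak D^2_{2n}(T)$ denotes the set of permutations in $\mathfrak D^2_{2n}$ avoiding every pattern in $T$. *)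

theory Defs
  imports "HOL-Combinatorics.Permutations" "HOL-Library.Disjoint_Sets"
begin

text \<open>Permutations of length m are bijections of {1..m}, fixing everything else.
  A pattern tau of length k is given as the list [tau(1),...,tau(k)].\<close>

definition contains_pattern :: "(nat \<Rightarrow> nat) \<Rightarrow> nat \<Rightarrow> nat list \<Rightarrow> bool" where
  "contains_pattern \<sigma> m \<tau> \<longleftrightarrow>
     (\<exists>idx :: nat \<Rightarrow> nat.
        (\<forall>a < length \<tau>. idx a \<in> {1..m}) \<and>
        (\<forall>a b. a < b \<and> b < length \<tau> \<longrightarrow> idx a < idx b) \<and>
        (\<forall>a < length \<tau>. \<forall>b < length \<tau>.
            (\<sigma> (idx a) < \<sigma> (idx b)) \<longleftrightarrow> (\<tau> ! a < \<tau> ! b)))"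

definition avoids :: "(nat \<Rightarrow> nat) \<Rightarrow> nat \<Rightarrow> nat list \<Rightarrow> bool" where
  "avoids \<sigma> m \<tau> \<longleftrightarrow> \<not> contains_pattern \<sigma> m \<tau>"

definition dumont2 :: "nat \<Rightarrow> (nat \<Rightarrow> nat) set" where
  "dumont2 n = {\<pi>. \<pi> permutes {1..2*n} \<and>
      (\<forall>i\<in>{1..n}. \<pi> (2*i) < 2*i \<and> \<pi> (2*i - 1) \<ge> 2*i - 1)}"

definition dumont2_av :: "nat \<Rightarrow> nat list set \<Rightarrow> (nat \<Rightarrow> nat) set" where
  "dumont2_av n T = {\<pi> \<in> dumont2 n. \<forall>\<tau>\<in>T. avoids \<pi> (2*n) \<tau>}"

definition catalan :: "nat \<Rightarrow> nat" where
  "catalan n = (2*n choose n) div (n+1)"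

end

theory Submission
  imports Defs "HOL-Computational_Algebra.Formal_Power_Series"
begin

lemma fps_nth_mult_numeral: "fps_nth ((f::real fps) * numeral k) n = fps_nth f n * numeral k"
  by (simp only: numeral_fps_const fps_mult_right_const_nth)

lemma cat_rec:
  fixes a :: "nat \<Rightarrow> nat"
  assumes a0: "a 0 = 1" and aS: "\<And>n. a (Suc n) = (\<Sum>k\<le>n. a k * a (n - k))"
  shows "(n + 2) * a (Suc n) = (4 * n + 2) * a n"
proof -
  define C :: "real fps" where "C = Abs_fps (\<lambda>n. real (a n))"
  have h1: "C - fps_X * C^2 = 1"
  proof (rule fps_ext)
    fix n show "fps_nth (C - fps_X * C^2) n = fps_nth (1::real fps) n"
    proof (cases n)
      case 0 then show ?thesis by (simp add: C_def a0)
    next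
      case (Suc m)
      have "fps_nth (fps_X * C^2) n = fps_nth (C*C) m" by (simp add: Suc power2_eq_square)
      also have "\<dots> = (\<Sum>k\<le>m. real (a k) * real (a (m - k)))" by (simp add: fps_mult_nth C_def atLeast0AtMost)
      also have "\<dots> = real (a n)" by (simp add: Suc aS)
      finally show ?thesis by (simp add: C_def Suc)
    qed
  qed
  define D where "D = 1 - fps_X * (C + C)"
  have hD: "D * D = 1 - 4 * fps_X"
  proof -
    have "D * D = 1 - 4 * fps_X * (C - fps_X * C^2)" unfolding D_def by (simp add: algebra_simps power2_eq_square)
    then show ?thesis using h1 by simp
  qed
  have "fps_deriv (D * D) = - 4" using hD by simp
  then have hd: "2 * D * fps_deriv D = - 4" by (simp add: fps_deriv_mult algebra_simps)
  have "(1 - 4 * fps_X) * fps_deriv D * 2 = (D * D) * fps_deriv D * 2" using hD by simp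
  also have "\<dots> = D * (2 * D * fps_deriv D)" by (simp add: algebra_simps)
  also have "\<dots> = - 4 * D" using hd by simp
  finally have he: "(1 - 4 * fps_X) * fps_deriv D * 2 = - 4 * D" .
  have dn: "fps_nth D (Suc j) = - 2 * real (a j)" for j
  proof -
    have "fps_nth D (Suc j) = - fps_nth (C + C) j" unfolding D_def by (simp only: fps_sub_nth fps_X_mult_nth) simp
    also have "\<dots> = - 2 * real (a j)" by (simp only: fps_add_nth) (simp add: C_def)
    finally show ?thesis .
  qed
  have "fps_nth ((1 - 4 * fps_X) * fps_deriv D * 2) (Suc n) = fps_nth (- 4 * D) (Suc n)" using he by simp
  then have "(real (n + 2) * fps_nth D (n+2) - 4 * (real (n + 1) * fps_nth D (n+1))) * 2 = - 4 * fps_nth D (Suc n)"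
    by (simp add: algebra_simps fps_nth_mult_numeral)
  then have "real (n + 2) * real (a (Suc n)) = real (4 * n + 2) * real (a n)"
    by (simp add: dn algebra_simps)
  then show ?thesis by (metis of_nat_eq_iff of_nat_mult)
qed

lemma catalan_rec_unique:
  fixes a :: "nat \<Rightarrow> nat"
  assumes a0: "a 0 = 1" and aS: "\<And>n. a (Suc n) = (\<Sum>k\<le>n. a k * a (n - k))"
  shows "(n + 1) * a n = (2 * n choose n)"
proof (induction n)
  case 0 then show ?case by (simp add: a0)
next
  case (Suc n)
  have b: "(n + 1) * (2 * Suc n choose Suc n) = 2 * (2 * n + 1) * (2 * n choose n)"
  proof -
    have e1: "Suc (Suc (2*n)) * (Suc (2*n) choose n) = (Suc (Suc (2*n)) choose Suc n) * Suc n"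
      using Suc_times_binomial_eq by blast
    have e2: "Suc (2*n) * (2*n choose n) = (Suc (2*n) choose Suc n) * Suc n"
      using Suc_times_binomial_eq by blast
    have e3: "(Suc (2*n) choose Suc n) = (Suc (2*n) choose n)"
      using binomial_symmetric[of "Suc n" "Suc (2*n)"] by simp
    have e4: "2 * Suc n = Suc (Suc (2*n))" by simp
    have gen: "\<And>X Y Z::nat. (2*n+2) * Y = Z * (n+1) \<Longrightarrow> (2*n+1) * X = Y * (n+1) \<Longrightarrow> (n+1) * Z = 2*(2*n+1)*X"
    proof -
      fix X Y Z :: nat assume h1: "(2*n+2) * Y = Z * (n+1)" and h2: "(2*n+1) * X = Y * (n+1)"
      have "(n+1) * ((n+1) * Z) = (n+1) * (2 * (Y * (n+1)))" using h1 by (simp add: algebra_simps)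
      also have "\<dots> = (n+1) * (2 * ((2*n+1) * X))" by (simp only: h2)
      also have "\<dots> = (n+1) * (2*(2*n+1)*X)" by (simp add: algebra_simps)
      finally have "(n+1) * ((n+1) * Z) = (n+1) * (2*(2*n+1)*X)" .
      then show "(n+1) * Z = 2*(2*n+1)*X" by (subst (asm) mult_left_cancel) simp_all
    qed
    show ?thesis unfolding e4 by (rule gen[of "Suc (2*n) choose n"]) (use e1 e2 e3 in simp_all)
  qed
  have "(n+1) * ((Suc n + 1) * a (Suc n)) = (n+1) * ((4 * n + 2) * a n)"
    using cat_rec[OF a0 aS, of n] by simp
  also have "\<dots> = 2 * (2*n+1) * ((n+1) * a n)" by (simp add: algebra_simps)
  also have "\<dots> = (n + 1) * (2 * Suc n choose Suc n)" using Suc b by simp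
  finally have "(n+1) * ((Suc n + 1) * a (Suc n)) = (n + 1) * (2 * Suc n choose Suc n)" .
  then show ?case by (subst (asm) mult_left_cancel) simp_all
qed

definition occ :: "(nat \<Rightarrow> nat) \<Rightarrow> nat \<Rightarrow> bool" where
  "occ \<sigma> m \<longleftrightarrow> (\<exists>a b c d. 1 \<le> a \<and> a < b \<and> b < c \<and> c < d \<and> d \<le> m \<and>
      \<sigma> b < \<sigma> d \<and> \<sigma> d < \<sigma> a \<and> \<sigma> a < \<sigma> c)"

lemma all_less_4: "(\<forall>a<(4::nat). P a) \<longleftrightarrow> P 0 \<and> P 1 \<and> P 2 \<and> P 3"
  by (auto simp: less_Suc_eq numeral_eq_Suc)

lemma contains_3142: "contains_pattern \<sigma> m [3,1,4,2] \<longleftrightarrow> occ \<sigma> m"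
proof
  assume hc: "contains_pattern \<sigma> m [3,1,4,2]"
  have len: "length [3,1,4,2::nat] = 4" by simp
  from hc obtain idx where h1: "\<forall>a<4. idx a \<in> {1..m}"
    and h2: "\<forall>a b. a < b \<and> b < 4 \<longrightarrow> idx a < idx b"
    and h3: "\<forall>a<4. \<forall>b<4. (\<sigma> (idx a) < \<sigma> (idx b)) \<longleftrightarrow> ([3,1,4,2::nat] ! a < [3,1,4,2] ! b)"
    unfolding contains_pattern_def len by blast
  have "idx 0 < idx 1" "idx 1 < idx 2" "idx 2 < idx 3" using h2 by auto
  moreover have "1 \<le> idx 0" "idx 3 \<le> m" using h1 by auto
  moreover have "\<sigma> (idx 1) < \<sigma> (idx 3)" using h3[rule_format, of 1 3] by simp
  moreover have "\<sigma> (idx 3) < \<sigma> (idx 0)" using h3[rule_format, of 3 0] by simp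
  moreover have "\<sigma> (idx 0) < \<sigma> (idx 2)" using h3[rule_format, of 0 2] by simp
  ultimately show "occ \<sigma> m" unfolding occ_def by blast
next
  assume "occ \<sigma> m"
  then obtain a b c d where h: "1 \<le> a" "a < b" "b < c" "c < d" "d \<le> m"
      "\<sigma> b < \<sigma> d" "\<sigma> d < \<sigma> a" "\<sigma> a < \<sigma> c"
    unfolding occ_def by blast
  define idx where "idx i = [a,b,c,d] ! i" for i
  have "(\<forall>i < 4. idx i \<in> {1..m})" using h by (simp add: all_less_4 idx_def)
  moreover have "(\<forall>i j. i < j \<and> j < 4 \<longrightarrow> idx i < idx j)"
  proof (intro allI impI)
    fix i j :: nat assume "i < j \<and> j < 4"
    then have "(i = 0 \<and> (j = 1 \<or> j = 2 \<or> j = 3)) \<or> (i = 1 \<and> (j = 2 \<or> j = 3)) \<or> (i = 2 \<and> j = 3)" by auto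
    then show "idx i < idx j" using h by (auto simp: idx_def)
  qed
  moreover have "(\<forall>i<4. \<forall>j<4. (\<sigma> (idx i) < \<sigma> (idx j)) \<longleftrightarrow> ([3,1,4,2::nat] ! i < [3,1,4,2] ! j))"
    using h by (simp add: all_less_4 idx_def)
  moreover have len: "length [3,1,4,2::nat] = 4" by simp
  ultimately show "contains_pattern \<sigma> m [3,1,4,2]" unfolding contains_pattern_def len by blast
qed

definition AV :: "nat \<Rightarrow> (nat \<Rightarrow> nat) set" where
  "AV n = {\<pi>. \<pi> permutes {1..2*n} \<and> (\<forall>i\<in>{1..n}. \<pi> (2*i) < 2*i \<and> \<pi> (2*i - 1) \<ge> 2*i - 1) \<and> \<not> occ \<pi> (2*n)}"

lemma AV_eq: "dumont2_av n {[3,1,4,2]} = AV n"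
  unfolding dumont2_av_def dumont2_def AV_def avoids_def using contains_3142[simplified] by auto

lemma perm_from_inj:
  assumes "inj_on f {a..b::nat}" "f ` {a..b} \<subseteq> {a..b}" "\<And>x. x \<notin> {a..b} \<Longrightarrow> f x = x"
  shows "f permutes {a..b}"
proof -
  have "f ` {a..b} = {a..b}"
    using assms(1,2) by (metis card_image card_subset_eq finite_atLeastAtMost)
  then have "bij_betw f {a..b} {a..b}" using assms(1) by (simp add: bij_betw_def)
  then show ?thesis using assms(3) by (rule bij_imp_permutes)
qed

lemma AV_perm: "\<pi> \<in> AV n \<Longrightarrow> \<pi> permutes {1..2*n}"
  by (simp add: AV_def)

lemma AV_nocc: "\<pi> \<in> AV n \<Longrightarrow> \<not> occ \<pi> (2*n)"
  by (simp add: AV_def)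

lemma AV_range: "\<pi> \<in> AV n \<Longrightarrow> 1 \<le> i \<Longrightarrow> i \<le> 2*n \<Longrightarrow> 1 \<le> \<pi> i \<and> \<pi> i \<le> 2*n"
  using permutes_in_image[OF AV_perm] by fastforce

lemma AV_out: "\<pi> \<in> AV n \<Longrightarrow> i \<notin> {1..2*n} \<Longrightarrow> \<pi> i = i"
  using permutes_not_in[OF AV_perm] by blast

lemma AV_inj: "\<pi> \<in> AV n \<Longrightarrow> \<pi> i = \<pi> j \<Longrightarrow> i = j"
  using permutes_inj[OF AV_perm] by (metis injD)

lemma AV_surj: "\<pi> \<in> AV n \<Longrightarrow> 1 \<le> v \<Longrightarrow> v \<le> 2*n \<Longrightarrow> \<exists>i. 1 \<le> i \<and> i \<le> 2*n \<and> \<pi> i = v"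
proof -
  assume "\<pi> \<in> AV n" "1 \<le> v" "v \<le> 2*n"
  then have "v \<in> \<pi> ` {1..2*n}" using permutes_image[OF AV_perm] by (metis atLeastAtMost_iff)
  then show ?thesis by auto
qed

lemma AV_even: "\<pi> \<in> AV n \<Longrightarrow> even e \<Longrightarrow> 1 \<le> e \<Longrightarrow> e \<le> 2*n \<Longrightarrow> \<pi> e < e"
proof -
  assume h: "\<pi> \<in> AV n" "even e" "1 \<le> e" "e \<le> 2*n"
  then obtain i where i: "e = 2*i" by blast
  then have "i \<in> {1..n}" using h by auto
  then show ?thesis using h(1) i by (auto simp: AV_def)
qed

lemma AV_odd: "\<pi> \<in> AV n \<Longrightarrow> odd e \<Longrightarrow> e \<le> 2*n \<Longrightarrow> \<pi> e \<ge> e"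
proof -
  assume h: "\<pi> \<in> AV n" "odd e" "e \<le> 2*n"
  then obtain i where i: "e = 2*i - 1" "i \<ge> 1" by (metis oddE add_diff_cancel_right' le_add2 mult_2 add.commute Suc_eq_plus1 le_add1 diff_Suc_1 add_Suc_right)
  then have "i \<in> {1..n}" using h by auto
  then show ?thesis using h(1) i by (auto simp: AV_def)
qed

lemma AV_I:
  assumes "\<pi> permutes {1..2*n}"
    and "\<And>e. even e \<Longrightarrow> 1 \<le> e \<Longrightarrow> e \<le> 2*n \<Longrightarrow> \<pi> e < e"
    and "\<And>e. odd e \<Longrightarrow> e \<le> 2*n \<Longrightarrow> \<pi> e \<ge> e"
    and "\<not> occ \<pi> (2*n)"
  shows "\<pi> \<in> AV n"
proof -
  have "\<forall>i\<in>{1..n}. \<pi> (2*i) < 2*i \<and> \<pi> (2*i - 1) \<ge> 2*i - 1"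
  proof
    fix i assume "i \<in> {1..n}"
    then show "\<pi> (2*i) < 2*i \<and> \<pi> (2*i - 1) \<ge> 2*i - 1"
      using assms(2)[of "2*i"] assms(3)[of "2*i-1"] by auto
  qed
  then show ?thesis using assms(1,4) by (simp add: AV_def)
qed

definition glue :: "nat \<Rightarrow> nat \<Rightarrow> (nat \<Rightarrow> nat) \<Rightarrow> (nat \<Rightarrow> nat) \<Rightarrow> nat \<Rightarrow> nat" where
  "glue n k \<alpha> \<beta> i = (if 1 \<le> i \<and> i \<le> 2*k then \<alpha> i
     else if i = 2*k+1 then 2*n+2
     else if i = 2*k+2 then 2*k+1
     else if 2*k+2 < i \<and> i \<le> 2*n+2 then 2*n+2 - \<beta> (2*n+3-i)
     else i)"

definition alpha_of :: "nat \<Rightarrow> (nat \<Rightarrow> nat) \<Rightarrow> nat \<Rightarrow> nat" where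
  "alpha_of k \<pi> i = (if 1 \<le> i \<and> i \<le> 2*k then \<pi> i else i)"

definition beta_of :: "nat \<Rightarrow> nat \<Rightarrow> (nat \<Rightarrow> nat) \<Rightarrow> nat \<Rightarrow> nat" where
  "beta_of n k \<pi> j = (if 1 \<le> j \<and> j \<le> 2*(n-k) then 2*n+2 - \<pi> (2*n+3-j) else j)"

lemma glue_vals:
  assumes k: "k \<le> n" and a: "\<alpha> \<in> AV k" and b: "\<beta> \<in> AV (n-k)"
  shows "1 \<le> i \<Longrightarrow> i \<le> 2*k \<Longrightarrow> glue n k \<alpha> \<beta> i = \<alpha> i \<and> 1 \<le> glue n k \<alpha> \<beta> i \<and> glue n k \<alpha> \<beta> i \<le> 2*k"
    and "glue n k \<alpha> \<beta> (2*k+1) = 2*n+2"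
    and "glue n k \<alpha> \<beta> (2*k+2) = 2*k+1"
    and "2*k+2 < i \<Longrightarrow> i \<le> 2*n+2 \<Longrightarrow> glue n k \<alpha> \<beta> i = 2*n+2 - \<beta> (2*n+3-i) \<and>
           2*k+2 \<le> glue n k \<alpha> \<beta> i \<and> glue n k \<alpha> \<beta> i \<le> 2*n+1"
    and "i \<notin> {1..2*n+2} \<Longrightarrow> glue n k \<alpha> \<beta> i = i"
proof -
  show "1 \<le> i \<Longrightarrow> i \<le> 2*k \<Longrightarrow> glue n k \<alpha> \<beta> i = \<alpha> i \<and> 1 \<le> glue n k \<alpha> \<beta> i \<and> glue n k \<alpha> \<beta> i \<le> 2*k"
    using AV_range[OF a, of i] by (simp add: glue_def)
  show "glue n k \<alpha> \<beta> (2*k+1) = 2*n+2" by (simp add: glue_def)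
  show "glue n k \<alpha> \<beta> (2*k+2) = 2*k+1" by (simp add: glue_def)
  show "2*k+2 < i \<Longrightarrow> i \<le> 2*n+2 \<Longrightarrow> glue n k \<alpha> \<beta> i = 2*n+2 - \<beta> (2*n+3-i) \<and>
           2*k+2 \<le> glue n k \<alpha> \<beta> i \<and> glue n k \<alpha> \<beta> i \<le> 2*n+1"
  proof -
    assume i: "2*k+2 < i" "i \<le> 2*n+2"
    have "1 \<le> \<beta> (2*n+3-i) \<and> \<beta> (2*n+3-i) \<le> 2*(n-k)"
      using AV_range[OF b, of "2*n+3-i"] i k by auto
    then show ?thesis using i k by (simp add: glue_def; arith)
  qed
  show "i \<notin> {1..2*n+2} \<Longrightarrow> glue n k \<alpha> \<beta> i = i" using k by (auto simp: glue_def)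
qed

lemma glue_in:
  assumes k: "k \<le> n" and a: "\<alpha> \<in> AV k" and b: "\<beta> \<in> AV (n-k)"
  shows "glue n k \<alpha> \<beta> \<in> AV (Suc n)"
proof -
  define g where "g = glue n k \<alpha> \<beta>"
  note gv = glue_vals[OF k a b, folded g_def]
  have R: "(1 \<le> i \<and> i \<le> 2*k \<and> g i = \<alpha> i \<and> 1 \<le> g i \<and> g i \<le> 2*k) \<or> (i = 2*k+1 \<and> g i = 2*n+2) \<or>
     (i = 2*k+2 \<and> g i = 2*k+1) \<or> (2*k+2 < i \<and> g i = 2*n+2 - \<beta> (2*n+3-i) \<and> 2*k+2 \<le> g i \<and> g i \<le> 2*n+1)"
    if "1 \<le> i" "i \<le> 2*n+2" for i
  proof -
    consider "i \<le> 2*k" | "i = 2*k+1" | "i = 2*k+2" | "2*k+2 < i" by linarith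
    then show ?thesis using gv(1)[of i] gv(2,3) gv(4)[of i] that by cases auto
  qed
  have bb: "1 \<le> \<beta> x \<and> \<beta> x \<le> 2*(n-k)" if "1 \<le> x" "x \<le> 2*(n-k)" for x
    using AV_range[OF b] that by blast
  have inj: "inj_on g {1..2*Suc n}"
  proof (rule inj_onI)
    fix i j assume i: "i \<in> {1..2*Suc n}" and j: "j \<in> {1..2*Suc n}" and e: "g i = g j"
    have i': "1 \<le> i" "i \<le> 2*n+2" and j': "1 \<le> j" "j \<le> 2*n+2" using i j by auto
    show "i = j"
    proof (cases "2*k+2 < i \<and> 2*k+2 < j")
      case True
      then have "2*n+2 - \<beta> (2*n+3-i) = 2*n+2 - \<beta> (2*n+3-j)" using R[OF i'] R[OF j'] e by auto
      moreover have "\<beta> (2*n+3-i) \<le> 2*(n-k)" "\<beta> (2*n+3-j) \<le> 2*(n-k)"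
        using bb[of "2*n+3-i"] bb[of "2*n+3-j"] True i' j' k by auto
      ultimately have "\<beta> (2*n+3-i) = \<beta> (2*n+3-j)" using k by linarith
      then have "2*n+3-i = 2*n+3-j" using AV_inj[OF b] by blast
      then show ?thesis using i' j' by linarith
    next
      case False
      then show ?thesis using R[OF i'] R[OF j'] e AV_inj[OF a, of i j] k by auto
    qed
  qed
  have img: "g ` {1..2*Suc n} \<subseteq> {1..2*Suc n}"
  proof
    fix y assume "y \<in> g ` {1..2*Suc n}"
    then obtain i where "i \<in> {1..2*Suc n}" "y = g i" by blast
    then show "y \<in> {1..2*Suc n}" using R[of i] k by auto
  qed
  have perm: "g permutes {1..2*Suc n}"
    by (rule perm_from_inj[OF inj img]) (use gv(5) in auto)
  have ev: "g e < e" if "even e" "1 \<le> e" "e \<le> 2*Suc n" for e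
  proof -
    have e': "1 \<le> e" "e \<le> 2*n+2" using that by auto
    consider "e \<le> 2*k" | "e = 2*k+1" | "e = 2*k+2" | "2*k+2 < e" by linarith
    then show ?thesis
    proof cases
      case 1 then show ?thesis using R[OF e'] AV_even[OF a that(1,2)] by auto
    next
      case 2 then show ?thesis using that(1) by simp
    next
      case 3 then show ?thesis using R[OF e'] by auto
    next
      case 4
      have x: "odd (2*n+3-e)" "2*n+3-e \<le> 2*(n-k)" using 4 that k by (auto, presburger?)
      have "\<beta> (2*n+3-e) \<ge> 2*n+3-e" using AV_odd[OF b x] .
      then show ?thesis using R[OF e'] 4 by linarith
    qed
  qed
  have od: "g e \<ge> e" if "odd e" "e \<le> 2*Suc n" for e
  proof -
    have e': "1 \<le> e" "e \<le> 2*n+2" using that by (cases e; simp)+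
    consider "e \<le> 2*k" | "e = 2*k+1" | "e = 2*k+2" | "2*k+2 < e" by linarith
    then show ?thesis
    proof cases
      case 1 then show ?thesis using R[OF e'] AV_odd[OF a that(1)] by auto
    next
      case 2 then show ?thesis using R[OF e'] k by auto
    next
      case 3 then show ?thesis using that(1) by simp
    next
      case 4
      have x: "even (2*n+3-e)" "1 \<le> 2*n+3-e" "2*n+3-e \<le> 2*(n-k)" using 4 that k e' by (auto, presburger?)
      have "\<beta> (2*n+3-e) < 2*n+3-e" using AV_even[OF b x] .
      then show ?thesis using R[OF e'] 4 by linarith
    qed
  qed
  have nocc: "\<not> occ g (2*Suc n)"
  proof
    assume "occ g (2*Suc n)"
    then obtain p q r s where h: "1 \<le> p" "p < q" "q < r" "r < s" "s \<le> 2*n+2"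
      "g q < g s" "g s < g p" "g p < g r" unfolding occ_def by auto
    consider "s \<le> 2*k" | "2*k+3 \<le> p" | "p \<le> 2*k" "2*k < s" | "p = 2*k+1" | "p = 2*k+2" by linarith
    then show False
    proof cases
      case 1
      then have "occ \<alpha> (2*k)" using h R[of p] R[of q] R[of r] R[of s] unfolding occ_def
        by (intro exI[of _ p] exI[of _ q] exI[of _ r] exI[of _ s]) auto
      then show False using AV_nocc[OF a] by blast
    next
      case 2
      have vals: "g x = 2*n+2 - \<beta> (2*n+3-x) \<and> \<beta> (2*n+3-x) \<le> 2*(n-k)" if "2*k+3 \<le> x" "x \<le> 2*n+2" for x
        using R[of x] bb[of "2*n+3-x"] that by auto
      have f1: "1 \<le> 2*n+3-s" "2*n+3-s < 2*n+3-r" "2*n+3-r < 2*n+3-q" "2*n+3-q < 2*n+3-p" "2*n+3-p \<le> 2*(n-k)"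
          using h 2 by auto
      have dl: "(c::nat) - x < c - y \<Longrightarrow> y < x" for c x y by arith
      have gp: "g p = 2*n+2 - \<beta> (2*n+3-p)" and gq: "g q = 2*n+2 - \<beta> (2*n+3-q)"
        and gr: "g r = 2*n+2 - \<beta> (2*n+3-r)" and gs: "g s = 2*n+2 - \<beta> (2*n+3-s)"
        using h 2 vals[of p] vals[of q] vals[of r] vals[of s] by auto
      have f2: "\<beta> (2*n+3-r) < \<beta> (2*n+3-p)" "\<beta> (2*n+3-p) < \<beta> (2*n+3-s)" "\<beta> (2*n+3-s) < \<beta> (2*n+3-q)"
        using h(6,7,8) unfolding gp gq gr gs by (auto dest: dl)
      have "occ \<beta> (2*(n-k))" unfolding occ_def using f1 f2 by blast
      then show False using AV_nocc[OF b] by blast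
    next
      case 3 then show False using h R[of p] R[of s] by auto
    next
      case 4 then show False using h R[of p] R[of r] by auto
    next
      case 5 then show False using h R[of p] R[of q] by auto
    qed
  qed
  show ?thesis unfolding g_def[symmetric] by (rule AV_I[OF perm ev od nocc])
qed

lemma block:
  assumes \<pi>: "\<pi> \<in> AV (Suc n)" and k: "k \<le> n" and p: "\<pi> (2*k+1) = 2*n+2"
  shows "\<forall>i\<in>{1..2*k}. \<pi> i \<le> 2*k"
proof (rule ccontr)
  assume "\<not> ?thesis"
  then obtain i0 where i0: "i0 \<in> {1..2*k}" "\<pi> i0 > 2*k" by auto
  have rng: "1 \<le> \<pi> i \<and> \<pi> i \<le> 2*n+2" if "1 \<le> i" "i \<le> 2*n+2" for i
    using AV_range[OF \<pi>, of i] that by simp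
  have injS: "inj_on \<pi> {1..2*k}" using permutes_inj[OF AV_perm[OF \<pi>]] by (simp add: inj_on_def)
  have "\<not> ({1..2*k} \<subseteq> \<pi> ` {1..2*k})"
  proof
    assume sub: "{1..2*k} \<subseteq> \<pi> ` {1..2*k}"
    have "card (\<pi> ` {1..2*k}) = card {1..2*k}" using card_image[OF injS] .
    then have "{1..2*k} = \<pi> ` {1..2*k}" using sub by (metis card_subset_eq finite_imageI finite_atLeastAtMost)
    then show False using i0 by (metis atLeastAtMost_iff imageI not_le)
  qed
  then obtain v0 where v0: "v0 \<in> {1..2*k}" "v0 \<notin> \<pi> ` {1..2*k}" by blast
  define v where "v = (LEAST v. v \<in> {1..2*k} \<and> v \<notin> \<pi> ` {1..2*k})"
  have v: "v \<in> {1..2*k}" "v \<notin> \<pi> ` {1..2*k}"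
    using LeastI[of "\<lambda>v. v \<in> {1..2*k} \<and> v \<notin> \<pi> ` {1..2*k}", OF conjI[OF v0]] unfolding v_def[symmetric] by auto
  have below: "u \<in> \<pi> ` {1..2*k}" if "u < v" "1 \<le> u" for u
  proof -
    have "u \<in> {1..2*k}" using that v by auto
    then show ?thesis using not_less_Least[of u "\<lambda>v. v \<in> {1..2*k} \<and> v \<notin> \<pi> ` {1..2*k}"] that unfolding v_def[symmetric] by blast
  qed
  obtain j where j: "1 \<le> j" "j \<le> 2*Suc n" "\<pi> j = v" using AV_surj[OF \<pi>, of v] v k by auto
  have j2: "2*k+1 < j"
  proof -
    have "j \<notin> {1..2*k}" using v(2) j by auto
    moreover have "j \<noteq> 2*k+1" using p j v k by auto
    ultimately show ?thesis using j by auto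
  qed
  have nocc: "\<not> occ \<pi> (2*Suc n)" using AV_nocc[OF \<pi>] .
  have avoid: "\<not> (\<pi> i' < v \<and> v < \<pi> i)" if "1 \<le> i" "i < i'" "i' \<le> 2*k" for i i'
  proof
    assume h: "\<pi> i' < v \<and> v < \<pi> i"
    have "\<pi> i \<le> 2*n+2" using rng[of i] that k by auto
    moreover have "\<pi> i \<noteq> 2*n+2" using AV_inj[OF \<pi>, of i "2*k+1"] p that by auto
    ultimately have "\<pi> i < \<pi> (2*k+1)" using p by simp
    then have "occ \<pi> (2*Suc n)" unfolding occ_def using that h j j2
      by (intro exI[of _ i] exI[of _ i'] exI[of _ "2*k+1"] exI[of _ j]) auto
    then show False using nocc by blast
  qed
  have ex: "\<exists>i. i \<in> {1..2*k} \<and> \<pi> i > v" using i0 v by auto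
  define t where "t = (LEAST i. i \<in> {1..2*k} \<and> \<pi> i > v)"
  have t: "t \<in> {1..2*k}" "\<pi> t > v" using LeastI_ex[OF ex] unfolding t_def[symmetric] by auto
  have tmin: "\<not> (i \<in> {1..2*k} \<and> \<pi> i > v)" if "i < t" for i
    using not_less_Least[of i "\<lambda>i. i \<in> {1..2*k} \<and> \<pi> i > v"] that unfolding t_def[symmetric] by blast
  have after: "\<pi> i > v" if "i \<in> {1..2*k}" "t \<le> i" for i
  proof (cases "i = t")
    case True then show ?thesis using t by simp
  next
    case False
    then have "\<not> (\<pi> i < v \<and> v < \<pi> t)" using avoid[of t i] that t by auto
    then have "\<pi> i \<ge> v" using t by auto
    moreover have "\<pi> i \<noteq> v" using v(2) that by auto
    ultimately show ?thesis by simp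
  qed
  have before: "\<pi> i < v" if "1 \<le> i" "i < t" for i
  proof -
    have "i \<in> {1..2*k}" using that t by auto
    moreover have "\<pi> i \<noteq> v" using v(2) calculation by auto
    ultimately show ?thesis using tmin[OF that(2)] by auto
  qed
  have img: "\<pi> ` {1..t-1} = {1..v-1}"
  proof
    show "\<pi> ` {1..t-1} \<subseteq> {1..v-1}"
    proof
      fix y assume "y \<in> \<pi> ` {1..t-1}"
      then obtain i where i: "1 \<le> i" "i \<le> t - 1" "y = \<pi> i" by auto
      have "i < t" using i t by auto
      then have "\<pi> i < v" using before i by auto
      moreover have "1 \<le> \<pi> i" using rng[of i] i t k by auto
      ultimately show "y \<in> {1..v-1}" using i by auto
    qed
    show "{1..v-1} \<subseteq> \<pi> ` {1..t-1}"
    proof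
      fix u assume u: "u \<in> {1..v-1}"
      then have "u \<in> \<pi> ` {1..2*k}" using below[of u] v by auto
      then obtain i where i: "i \<in> {1..2*k}" "u = \<pi> i" by auto
      have "\<not> t \<le> i" using after[OF i(1)] i u by auto
      then show "u \<in> \<pi> ` {1..t-1}" using i by auto
    qed
  qed
  have injt: "inj_on \<pi> {1..t-1}" using permutes_inj[OF AV_perm[OF \<pi>]] by (simp add: inj_on_def)
  have "card {1..t-1} = card {1..v-1}" using card_image[OF injt] img by simp
  then have tv: "t = v" using t v by auto
  define e where "e = (if even v then v else v+1)"
  have e: "even e" "e \<in> {1..2*k}" "t \<le> e" "e \<le> v + 1"
    using v tv unfolding e_def by (auto, presburger)
  have "\<pi> e > v" using after[OF e(2,3)] .
  moreover have "\<pi> e < e" using AV_even[OF \<pi> e(1)] e k by auto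
  ultimately show False using e by auto
qed

lemma decomp:
  assumes \<pi>: "\<pi> \<in> AV (Suc n)"
  shows "\<exists>k\<le>n. alpha_of k \<pi> \<in> AV k \<and> beta_of n k \<pi> \<in> AV (n-k) \<and>
           \<pi> = glue n k (alpha_of k \<pi>) (beta_of n k \<pi>)"
proof -
  have rng: "1 \<le> \<pi> i \<and> \<pi> i \<le> 2*n+2" if "1 \<le> i" "i \<le> 2*n+2" for i
    using AV_range[OF \<pi>, of i] that by simp
  obtain p where p: "1 \<le> p" "p \<le> 2*Suc n" "\<pi> p = 2*n+2" using AV_surj[OF \<pi>, of "2*n+2"] by auto
  have "odd p"
  proof
    assume "even p"
    then have "\<pi> p < p" using AV_even[OF \<pi>] p by blast
    then show False using p by simp
  qed
  then obtain k where pk: "p = 2*k+1" by (metis oddE)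
  have k: "k \<le> n" using p pk by simp
  have p1: "\<pi> (2*k+1) = 2*n+2" using p pk by simp
  have blk: "1 \<le> \<pi> i \<and> \<pi> i \<le> 2*k" if "1 \<le> i" "i \<le> 2*k" for i
    using block[OF \<pi> k p1] rng[of i] that k by auto
  have injS: "inj_on \<pi> {1..2*k}" using permutes_inj[OF AV_perm[OF \<pi>]] by (simp add: inj_on_def)
  have imgS: "\<pi> ` {1..2*k} = {1..2*k}"
  proof -
    have "\<pi> ` {1..2*k} \<subseteq> {1..2*k}" using blk by auto
    then show ?thesis using card_image[OF injS] by (metis card_subset_eq finite_atLeastAtMost)
  qed
  have big: "\<pi> i > 2*k" if "2*k < i" "i \<le> 2*n+2" for i
  proof (rule ccontr)
    assume "\<not> ?thesis"
    then have "\<pi> i \<in> {1..2*k}" using rng[of i] that by auto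
    then obtain i' where "i' \<in> {1..2*k}" "\<pi> i = \<pi> i'" using imgS by (metis imageE)
    then show False using AV_inj[OF \<pi>, of i i'] that by auto
  qed
  have p2: "\<pi> (2*k+2) = 2*k+1"
  proof -
    have "\<pi> (2*k+2) < 2*k+2" using AV_even[OF \<pi>, of "2*k+2"] k by auto
    then show ?thesis using big[of "2*k+2"] k by auto
  qed
  have mid: "2*k+2 \<le> \<pi> i \<and> \<pi> i \<le> 2*n+1" if "2*k+3 \<le> i" "i \<le> 2*n+2" for i
  proof -
    have "\<pi> i \<noteq> 2*k+1" using AV_inj[OF \<pi>, of i "2*k+2"] p2 that by auto
    moreover have "\<pi> i \<noteq> 2*n+2" using AV_inj[OF \<pi>, of i "2*k+1"] p1 that by auto
    ultimately show ?thesis using big[of i] rng[of i] that by auto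
  qed
  define \<alpha> where "\<alpha> = alpha_of k \<pi>"
  define \<beta> where "\<beta> = beta_of n k \<pi>"
  have \<alpha>v: "\<alpha> i = \<pi> i" if "1 \<le> i" "i \<le> 2*k" for i using that by (simp add: \<alpha>_def alpha_of_def)
  have \<beta>v: "\<beta> j = 2*n+2 - \<pi> (2*n+3-j)" if "1 \<le> j" "j \<le> 2*(n-k)" for j
    using that by (simp add: \<beta>_def beta_of_def)
  have \<alpha>AV: "\<alpha> \<in> AV k"
  proof (rule AV_I)
    have ii: "\<alpha> ` {1..2*k} = \<pi> ` {1..2*k}" by (rule image_cong) (auto simp: \<alpha>v)
    have inj: "inj_on \<alpha> {1..2*k}" using injS inj_on_cong[of "{1..2*k}" \<alpha> \<pi>] \<alpha>v by auto
    have img: "\<alpha> ` {1..2*k} \<subseteq> {1..2*k}" using imgS ii by simp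
    show "\<alpha> permutes {1..2*k}" by (rule perm_from_inj[OF inj img]) (auto simp add: \<alpha>_def alpha_of_def)
    show "\<alpha> e < e" if "even e" "1 \<le> e" "e \<le> 2*k" for e
      using AV_even[OF \<pi> that(1,2)] that \<alpha>v k by auto
    show "\<alpha> e \<ge> e" if "odd e" "e \<le> 2*k" for e
    proof -
      have "1 \<le> e" using that(1) by (cases e) auto
      then show ?thesis using AV_odd[OF \<pi> that(1)] that \<alpha>v k by auto
    qed
    show "\<not> occ \<alpha> (2*k)"
    proof
      assume "occ \<alpha> (2*k)"
      then obtain a b c d where h: "1 \<le> a" "a < b" "b < c" "c < d" "d \<le> 2*k"
        "\<alpha> b < \<alpha> d" "\<alpha> d < \<alpha> a" "\<alpha> a < \<alpha> c" unfolding occ_def by auto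
      have "occ \<pi> (2*Suc n)" unfolding occ_def using h \<alpha>v[of a] \<alpha>v[of b] \<alpha>v[of c] \<alpha>v[of d] k
        by (intro exI[of _ a] exI[of _ b] exI[of _ c] exI[of _ d]) auto
      then show False using AV_nocc[OF \<pi>] by blast
    qed
  qed
  have \<beta>rng: "1 \<le> \<beta> j \<and> \<beta> j \<le> 2*(n-k)" if "1 \<le> j" "j \<le> 2*(n-k)" for j
  proof -
    have m: "2*k+2 \<le> \<pi> (2*n+3-j) \<and> \<pi> (2*n+3-j) \<le> 2*n+1" by (rule mid) (use that k in arith)+
    show ?thesis using \<beta>v[OF that] m that k by arith
  qed
  have \<beta>AV: "\<beta> \<in> AV (n-k)"
  proof (rule AV_I)
    have inj: "inj_on \<beta> {1..2*(n-k)}"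
    proof (rule inj_onI)
      fix x y assume x: "x \<in> {1..2*(n-k)}" and y: "y \<in> {1..2*(n-k)}" and e: "\<beta> x = \<beta> y"
      have "\<pi> (2*n+3-x) \<le> 2*n+1" "\<pi> (2*n+3-y) \<le> 2*n+1" using mid[of "2*n+3-x"] mid[of "2*n+3-y"] x y k by auto
      moreover have "2*n+2 - \<pi> (2*n+3-x) = 2*n+2 - \<pi> (2*n+3-y)" using e \<beta>v[of x] \<beta>v[of y] x y by auto
      ultimately have "\<pi> (2*n+3-x) = \<pi> (2*n+3-y)" by arith
      then have "2*n+3-x = 2*n+3-y" using AV_inj[OF \<pi>] by blast
      then show "x = y" using x y k by auto
    qed
    have img: "\<beta> ` {1..2*(n-k)} \<subseteq> {1..2*(n-k)}" using \<beta>rng by auto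
    show "\<beta> permutes {1..2*(n-k)}" by (rule perm_from_inj[OF inj img]) (auto simp add: \<beta>_def beta_of_def)
    show "\<beta> e < e" if "even e" "1 \<le> e" "e \<le> 2*(n-k)" for e
    proof -
      have x: "odd (2*n+3-e)" "2*n+3-e \<le> 2*Suc n" using that k by (auto, presburger?)
      have "\<pi> (2*n+3-e) \<ge> 2*n+3-e" using AV_odd[OF \<pi> x] .
      then show ?thesis using \<beta>v[of e] that by auto
    qed
    show "\<beta> e \<ge> e" if "odd e" "e \<le> 2*(n-k)" for e
    proof -
      have e1: "1 \<le> e" using that(1) by (cases e) auto
      have x: "even (2*n+3-e)" "1 \<le> 2*n+3-e" "2*n+3-e \<le> 2*Suc n" using that k e1 by (auto, presburger?)
      have "\<pi> (2*n+3-e) < 2*n+3-e" using AV_even[OF \<pi> x] .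
      then show ?thesis using \<beta>v[of e] that e1 by auto
    qed
    show "\<not> occ \<beta> (2*(n-k))"
    proof
      assume "occ \<beta> (2*(n-k))"
      then obtain a b c d where h: "1 \<le> a" "a < b" "b < c" "c < d" "d \<le> 2*(n-k)"
        "\<beta> b < \<beta> d" "\<beta> d < \<beta> a" "\<beta> a < \<beta> c" unfolding occ_def by auto
      have dl: "(C::nat) - x < C - y \<Longrightarrow> y < x" for C x y by arith
      have f1: "1 \<le> 2*n+3-d" "2*n+3-d < 2*n+3-c" "2*n+3-c < 2*n+3-b" "2*n+3-b < 2*n+3-a" "2*n+3-a \<le> 2*Suc n"
        using h k by auto
      have f2: "\<pi> (2*n+3-c) < \<pi> (2*n+3-a)" "\<pi> (2*n+3-a) < \<pi> (2*n+3-d)" "\<pi> (2*n+3-d) < \<pi> (2*n+3-b)"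
        using h(6,7,8) \<beta>v[of a] \<beta>v[of b] \<beta>v[of c] \<beta>v[of d] h(1-5) by (auto dest: dl)
      have "occ \<pi> (2*Suc n)" unfolding occ_def using f1 f2 by blast
      then show False using AV_nocc[OF \<pi>] by blast
    qed
  qed
  have eq: "\<pi> = glue n k \<alpha> \<beta>"
  proof
    fix i
    consider "1 \<le> i \<and> i \<le> 2*k" | "i = 2*k+1" | "i = 2*k+2" | "2*k+2 < i \<and> i \<le> 2*n+2" | "i \<notin> {1..2*n+2}"
      by (cases "i \<in> {1..2*n+2}") (auto simp del: One_nat_def, linarith)
    then show "\<pi> i = glue n k \<alpha> \<beta> i"
    proof cases
      case 1 then show ?thesis using glue_vals(1)[OF k \<alpha>AV \<beta>AV, of i] \<alpha>v[of i] by auto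
    next
      case 2 then show ?thesis using glue_vals(2)[OF k \<alpha>AV \<beta>AV] p1 by auto
    next
      case 3 then show ?thesis using glue_vals(3)[OF k \<alpha>AV \<beta>AV] p2 by auto
    next
      case 4
      have "\<beta> (2*n+3-i) = 2*n+2 - \<pi> i" using \<beta>v[of "2*n+3-i"] 4 k by auto
      moreover have "\<pi> i \<le> 2*n+2" using mid[of i] 4 by auto
      ultimately show ?thesis using glue_vals(4)[OF k \<alpha>AV \<beta>AV, of i] 4 by auto
    next
      case 5
      then have "\<pi> i = i" using AV_out[OF \<pi>, of i] by auto
      then show ?thesis using glue_vals(5)[OF k \<alpha>AV \<beta>AV, of i] 5 by auto
    qed
  qed
  show ?thesis using k \<alpha>AV \<beta>AV eq unfolding \<alpha>_def \<beta>_def by blast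
qed

lemma glue_inj: "inj_on (\<lambda>(k,\<alpha>,\<beta>). glue n k \<alpha> \<beta>) (SIGMA k:{..n}. AV k \<times> AV (n-k))"
proof (rule inj_onI)
  fix x y assume x: "x \<in> (SIGMA k:{..n}. AV k \<times> AV (n-k))" and y: "y \<in> (SIGMA k:{..n}. AV k \<times> AV (n-k))"
    and exy: "(\<lambda>(k,\<alpha>,\<beta>). glue n k \<alpha> \<beta>) x = (\<lambda>(k,\<alpha>,\<beta>). glue n k \<alpha> \<beta>) y"
  obtain k \<alpha> \<beta> where xk: "x = (k, \<alpha>, \<beta>)" by (cases x) auto
  obtain k' \<alpha>' \<beta>' where yk: "y = (k', \<alpha>', \<beta>')" by (cases y) auto
  have k: "k \<le> n" and a: "\<alpha> \<in> AV k" and b: "\<beta> \<in> AV (n-k)" using x xk by auto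
  have k': "k' \<le> n" and a': "\<alpha>' \<in> AV k'" and b': "\<beta>' \<in> AV (n-k')" using y yk by auto
  have e: "glue n k \<alpha> \<beta> = glue n k' \<alpha>' \<beta>'" using exy xk yk by simp
  note g = glue_vals[OF k a b] and g' = glue_vals[OF k' a' b']
  have kk: "k = k'"
  proof (rule ccontr)
    assume ne: "k \<noteq> k'"
    have v: "glue n k' \<alpha>' \<beta>' (2*k+1) = 2*n+2" using g(2) e by simp
    consider "2*k+1 \<le> 2*k'" | "2*k'+2 < 2*k+1" using ne by linarith
    then show False
    proof cases
      case 1 then show False using g'(1)[of "2*k+1"] v k' by auto
    next
      case 2 then show False using g'(4)[of "2*k+1"] v k by auto
    qed
  qed
  have aa: "\<alpha> = \<alpha>'"
  proof
    fix i show "\<alpha> i = \<alpha>' i"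
    proof (cases "i \<in> {1..2*k}")
      case True then show ?thesis using g(1)[of i] g'(1)[of i] e kk by auto
    next
      case False then show ?thesis using AV_out[OF a] AV_out[OF a'] kk by auto
    qed
  qed
  have bb: "\<beta> = \<beta>'"
  proof
    fix j show "\<beta> j = \<beta>' j"
    proof (cases "j \<in> {1..2*(n-k)}")
      case True
      have r: "\<beta> j \<le> 2*(n-k)" "\<beta>' j \<le> 2*(n-k)" using AV_range[OF b, of j] AV_range[OF b', of j] True kk by auto
      have j3: "2*n+3-(2*n+3-j) = j" using True k by auto
      have "2*n+2 - \<beta> j = 2*n+2 - \<beta>' j"
        using g(4)[of "2*n+3-j"] g'(4)[of "2*n+3-j"] e kk True k j3 by auto
      then show ?thesis using r k by arith
    next
      case False then show ?thesis using AV_out[OF b] AV_out[OF b'] kk by auto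
    qed
  qed
  show "x = y" using kk aa bb xk yk by simp
qed

lemma AV_Suc: "AV (Suc n) = (\<lambda>(k,\<alpha>,\<beta>). glue n k \<alpha> \<beta>) ` (SIGMA k:{..n}. AV k \<times> AV (n-k))"
proof
  show "AV (Suc n) \<subseteq> (\<lambda>(k,\<alpha>,\<beta>). glue n k \<alpha> \<beta>) ` (SIGMA k:{..n}. AV k \<times> AV (n-k))"
  proof
    fix \<pi> assume "\<pi> \<in> AV (Suc n)"
    then obtain k where "k \<le> n" "alpha_of k \<pi> \<in> AV k" "beta_of n k \<pi> \<in> AV (n-k)"
      "\<pi> = glue n k (alpha_of k \<pi>) (beta_of n k \<pi>)" using decomp by blast
    then show "\<pi> \<in> (\<lambda>(k,\<alpha>,\<beta>). glue n k \<alpha> \<beta>) ` (SIGMA k:{..n}. AV k \<times> AV (n-k))"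
      by (intro image_eqI[of _ _ "(k, alpha_of k \<pi>, beta_of n k \<pi>)"]) auto
  qed
  show "(\<lambda>(k,\<alpha>,\<beta>). glue n k \<alpha> \<beta>) ` (SIGMA k:{..n}. AV k \<times> AV (n-k)) \<subseteq> AV (Suc n)"
    using glue_in by auto
qed

lemma AV_finite: "finite (AV n)"
proof -
  have "AV n \<subseteq> {\<pi>. \<pi> permutes {1..2*n}}" by (auto simp: AV_def)
  then show ?thesis using finite_permutations[of "{1..2*n}"] finite_subset by auto
qed

lemma AV_0: "AV 0 = {id}"
proof -
  have "id \<in> AV 0" unfolding AV_def occ_def by (auto simp: permutes_id)
  moreover have "\<pi> = id" if "\<pi> \<in> AV 0" for \<pi> using AV_perm[OF that] by (simp add: permutes_empty)
  ultimately show ?thesis by blast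
qed

lemma card_AV_Suc: "card (AV (Suc n)) = (\<Sum>k\<le>n. card (AV k) * card (AV (n - k)))"
proof -
  have "card (AV (Suc n)) = card (SIGMA k:{..n}. AV k \<times> AV (n-k))"
    unfolding AV_Suc by (rule card_image[OF glue_inj])
  also have "\<dots> = (\<Sum>k\<le>n. card (AV k \<times> AV (n-k)))"
    by (rule card_SigmaI) (auto simp: AV_finite)
  also have "\<dots> = (\<Sum>k\<le>n. card (AV k) * card (AV (n - k)))"
    by (simp add: card_cartesian_product)
  finally show ?thesis .
qed

theorem theorem3p1:
  fixes n :: nat
  shows "card (dumont2_av n {[3,1,4,2]}) = catalan n"
proof -
  define a where "a = (\<lambda>n. card (AV n))"
  have a0: "a 0 = 1" by (simp add: a_def AV_0)
  have aS: "\<And>n. a (Suc n) = (\<Sum>k\<le>n. a k * a (n - k))" by (simp add: a_def card_AV_Suc)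
  have h: "(n + 1) * a n = (2 * n choose n)" by (rule catalan_rec_unique[OF a0 aS])
  have "catalan n = ((n + 1) * a n) div (n + 1)" unfolding catalan_def h ..
  also have "\<dots> = a n" by (rule nonzero_mult_div_cancel_left) simp
  finally show ?thesis using AV_eq a_def by simp
qed

end
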